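(* Let $\omega(a,\beta)$ be any function with $W^{(n)}(a,\beta)\le\omega(a,\beta)$ whenever $W^{(n)}(a,\beta)$ is defined. Then for $a,\rho\in(0,1)$ with $2^na\in\mathbb Z$, $\mathbf{MaxStab}_\Phi(a)\le\Upsilon_\rho(a)$, where $$\Upsilon_\rho(a):=\sup_{\beta,P_{Z|SX}}\mathbb E[\Phi(a+\rho Z)]$$ subject to $0\le\beta\le\min\{a,1-a\}$, $0\le a+\rho Z\le1$ a.s., $\mathbb EZ=0$, $\mathbb E[XZ]=\beta$, $\mathbb E[Z^2]\le(1-\rho)\omega(a,\beta)+\rho\mathbb E[SZ]$, where $(S,X,Z)\sim P_{SX}P_{Z|SX}$ with $P_{SX}(-a,-1)=\frac{1-a+\beta}2$, $P_{SX}(-a,1)=\frac{1-a-\beta}2$, $P_{SX}(1-a,-1)=\frac{a-\beta}2$, $P_{SX}(1-a,1)=\frac{a+\beta}2$, and the supremum is over $\beta$ and conditional probability mass functions $P_{Z|SX}$ of a real random variable $Z$.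
   Context: $\mathbf X$ uniform on $\{-1,1\}^n$; $\mathbf Y$ obtained by independently flipping each coordinate of $\mathbf X$ with probability $(1-\rho)/2$; $T_\rho f(\mathbf x)=\mathbb E[f(\mathbf Y)\mid\mathbf X=\mathbf x]$; $\Phi:[0,1]\to\mathbb R$ continuous and strictly convex; $\mathbf{MaxStab}_\Phi(a)=\max\{\mathbb E[\Phi(T_\rho f(\mathbf X))]:f:\{-1,1\}^n\to\{0,1\},\mathbb Ef(\mathbf X)=a\}$. For $f:\{-1,1\}^n\to\mathbb R$, $\hat f_{\{i\}}=\mathbb E[f(\mathbf X)X_i]$, $\mathbf W_1[f]=\sum_i\hat f_{\{i\}}^2$, and $W^{(n)}(a,\beta):=\max\{\mathbf W_1[f]:f\text{ Boolean},\ \mathbb Ef=a,\ \max_{i}|\hat f_{\{i\}}|=\beta\}$. *)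

theory Defs
  imports "HOL-Probability.Probability"
begin

definition strictly_convex_on :: "real set \<Rightarrow> (real \<Rightarrow> real) \<Rightarrow> bool" where
  "strictly_convex_on A \<Phi> \<longleftrightarrow> convex A \<and>
     (\<forall>x\<in>A. \<forall>y\<in>A. \<forall>t::real. x \<noteq> y \<and> 0 < t \<and> t < 1 \<longrightarrow>
        \<Phi> (t * x + (1 - t) * y) < t * \<Phi> x + (1 - t) * \<Phi> y)"

text \<open>The Boolean cube \<open>{-1,1}^n\<close>: points are functions on \<open>{..<n}\<close>
  (extensional, value \<open>undefined\<close> outside).\<close>
definition cube :: "nat \<Rightarrow> (nat \<Rightarrow> real) set" where
  "cube n = PiE {..<n} (\<lambda>_. {-1, 1})"

definition Ecube :: "nat \<Rightarrow> ((nat \<Rightarrow> real) \<Rightarrow> real) \<Rightarrow> real" where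
  "Ecube n f = (\<Sum>x\<in>cube n. f x) / 2 ^ n"

text \<open>Noise operator: \<open>Y\<close> flips each coordinate of \<open>X\<close> independently
  with probability \<open>(1-\<rho>)/2\<close>.\<close>
definition noise_op :: "nat \<Rightarrow> real \<Rightarrow> ((nat \<Rightarrow> real) \<Rightarrow> real) \<Rightarrow> (nat \<Rightarrow> real) \<Rightarrow> real" where
  "noise_op n \<rho> f x =
     (\<Sum>y\<in>cube n. (\<Prod>i<n. if y i = x i then (1 + \<rho>) / 2 else (1 - \<rho>) / 2) * f y)"

definition boolean_fun :: "nat \<Rightarrow> ((nat \<Rightarrow> real) \<Rightarrow> real) \<Rightarrow> bool" where
  "boolean_fun n f \<longleftrightarrow> (\<forall>x\<in>cube n. f x \<in> {0, 1})"

definition MaxStab :: "nat \<Rightarrow> real \<Rightarrow> (real \<Rightarrow> real) \<Rightarrow> real \<Rightarrow> real" where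
  "MaxStab n \<rho> \<Phi> a =
     Max {Ecube n (\<lambda>x. \<Phi> (noise_op n \<rho> f x)) | f. boolean_fun n f \<and> Ecube n f = a}"

definition fhat1 :: "nat \<Rightarrow> ((nat \<Rightarrow> real) \<Rightarrow> real) \<Rightarrow> nat \<Rightarrow> real" where
  "fhat1 n f i = Ecube n (\<lambda>x. f x * x i)"

definition W1 :: "nat \<Rightarrow> ((nat \<Rightarrow> real) \<Rightarrow> real) \<Rightarrow> real" where
  "W1 n f = (\<Sum>i<n. (fhat1 n f i)\<^sup>2)"

definition maxcoef :: "nat \<Rightarrow> ((nat \<Rightarrow> real) \<Rightarrow> real) \<Rightarrow> real" where
  "maxcoef n f = Max ((\<lambda>i. \<bar>fhat1 n f i\<bar>) ` {..<n})"

text \<open>Admissible functions for \<open>W^{(n)}(a,\<beta>)\<close>; \<open>W^{(n)}(a,\<beta>)\<close> is defined iff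
  this set is nonempty.\<close>
definition W_feasible :: "nat \<Rightarrow> real \<Rightarrow> real \<Rightarrow> ((nat \<Rightarrow> real) \<Rightarrow> real) set" where
  "W_feasible n a \<beta> = {f. boolean_fun n f \<and> Ecube n f = a \<and> maxcoef n f = \<beta>}"

definition Wn :: "nat \<Rightarrow> real \<Rightarrow> real \<Rightarrow> real" where
  "Wn n a \<beta> = Max (W1 n ` W_feasible n a \<beta>)"

definition PSX :: "real \<Rightarrow> real \<Rightarrow> real \<Rightarrow> real \<Rightarrow> real" where
  "PSX a \<beta> s x =
     (if s = -a \<and> x = -1 then (1 - a + \<beta>) / 2
      else if s = -a \<and> x = 1 then (1 - a - \<beta>) / 2
      else if s = 1 - a \<and> x = -1 then (a - \<beta>) / 2
      else if s = 1 - a \<and> x = 1 then (a + \<beta>) / 2 else 0)"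

definition SXpts :: "real \<Rightarrow> (real \<times> real) set" where
  "SXpts a = {(-a, -1), (-a, 1), (1 - a, -1), (1 - a, 1)}"

text \<open>\<open>E[g(S,X,Z)]\<close> for \<open>(S,X,Z) \<sim> P_{SX} P_{Z|SX}\<close>, the conditional pmf being
  the kernel \<open>K\<close>.\<close>
definition EJ :: "real \<Rightarrow> real \<Rightarrow> (real \<Rightarrow> real \<Rightarrow> real pmf)
                   \<Rightarrow> (real \<Rightarrow> real \<Rightarrow> real \<Rightarrow> real) \<Rightarrow> real" where
  "EJ a \<beta> K g = (\<Sum>(s, x)\<in>SXpts a. PSX a \<beta> s x *
                    measure_pmf.expectation (K s x) (\<lambda>z. g s x z))"

definition Ups_feasible :: "real \<Rightarrow> real \<Rightarrow> (real \<Rightarrow> real \<Rightarrow> real)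
                              \<Rightarrow> (real \<times> (real \<Rightarrow> real \<Rightarrow> real pmf)) set" where
  "Ups_feasible \<rho> a \<omega> = {(\<beta>, K).
     0 \<le> \<beta> \<and> \<beta> \<le> min a (1 - a) \<and>
     (\<forall>(s, x)\<in>SXpts a. PSX a \<beta> s x > 0 \<longrightarrow>
        (\<forall>z\<in>set_pmf (K s x). 0 \<le> a + \<rho> * z \<and> a + \<rho> * z \<le> 1)) \<and>
     EJ a \<beta> K (\<lambda>s x z. z) = 0 \<and>
     EJ a \<beta> K (\<lambda>s x z. x * z) = \<beta> \<and>
     EJ a \<beta> K (\<lambda>s x z. z\<^sup>2) \<le> (1 - \<rho>) * \<omega> a \<beta> + \<rho> * EJ a \<beta> K (\<lambda>s x z. s * z)}"

text \<open>\<open>\<Upsilon>_\<rho>(a)\<close>, as an extended real (supremum of the empty set is \<open>-\<infinity>\<close>).\<close>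
definition Upsilon :: "real \<Rightarrow> (real \<Rightarrow> real) \<Rightarrow> (real \<Rightarrow> real \<Rightarrow> real) \<Rightarrow> real \<Rightarrow> ereal" where
  "Upsilon \<rho> \<Phi> \<omega> a =
     (SUP (\<beta>, K)\<in>Ups_feasible \<rho> a \<omega>. ereal (EJ a \<beta> K (\<lambda>s x z. \<Phi> (a + \<rho> * z))))"

end

theory Submission
  imports Defs
begin


definition chi :: "nat \<Rightarrow> nat set \<Rightarrow> (nat \<Rightarrow> real) \<Rightarrow> real" where
  "chi n S x = (\<Prod>i<n. if i \<in> S then x i else 1)"

lemma finite_cube[simp]: "finite (cube n)"
  unfolding cube_def by (intro finite_PiE) auto

lemma card_cube: "card (cube n) = 2 ^ n"
  unfolding cube_def by (subst card_PiE) (auto simp: numeral_2_eq_2)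

lemma cube_val: "x \<in> cube n \<Longrightarrow> i < n \<Longrightarrow> x i = -1 \<or> x i = 1"
  unfolding cube_def by (auto simp: PiE_iff)

lemma sum_cube_prod:
  fixes g :: "nat \<Rightarrow> real \<Rightarrow> real"
  shows   "(\<Sum>x\<in>cube n. \<Prod>i<n. g i (x i)) = (\<Prod>i<n. g i (-1) + g i 1)"
proof -
  have "(\<Prod>i<n. \<Sum>y\<in>{-1,1::real}. g i y) = (\<Sum>x\<in>cube n. \<Prod>i<n. g i (x i))"
    unfolding cube_def by (rule prod_sum_PiE[of "{..<n}" "\<lambda>_. {-1,1}" g]) auto
  then show ?thesis by simp
qed

lemma chi_orth:
  assumes "S \<subseteq> {..<n}" "T \<subseteq> {..<n}"
  shows "(\<Sum>x\<in>cube n. chi n S x * chi n T x) = (if S = T then 2 ^ n else 0)"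
proof -
  have "(\<Sum>x\<in>cube n. chi n S x * chi n T x) =
        (\<Sum>x\<in>cube n. \<Prod>i<n. (\<lambda>i v. (if i \<in> S then v else 1) * (if i \<in> T then v else (1::real))) i (x i))"
    unfolding chi_def by (simp add: prod.distrib)
  also have "\<dots> = (\<Prod>i<n. (if (i \<in> S) = (i \<in> T) then 2 else 0))"
    by (subst sum_cube_prod) (auto intro!: prod.cong)
  also have "\<dots> = (if S = T then 2 ^ n else 0)"
  proof (cases "S = T")
    case False
    then obtain i where "i < n" "(i \<in> S) \<noteq> (i \<in> T)" using assms by blast
    then show ?thesis using False by (auto intro!: prod_zero)
  qed simp
  finally show ?thesis .
qed

lemma noise_chi:
  assumes "x \<in> cube n" "S \<subseteq> {..<n}"
  shows "noise_op n \<rho> (chi n S) x = \<rho> ^ card S * chi n S x"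
proof -
  have "noise_op n \<rho> (chi n S) x =
     (\<Sum>y\<in>cube n. \<Prod>i<n. (\<lambda>i v. (if v = x i then (1 + \<rho>) / 2 else (1 - \<rho>) / 2) * (if i \<in> S then v else 1)) i (y i))"
    unfolding noise_op_def chi_def by (simp add: prod.distrib)
  also have "\<dots> = (\<Prod>i<n. (if i \<in> S then \<rho> else 1) * (if i \<in> S then x i else 1))"
    apply (subst sum_cube_prod)
    apply (rule prod.cong, simp)
    subgoal for i
      apply (subgoal_tac "x i = -1 \<or> x i = 1")
       apply (elim disjE) apply (auto simp: field_simps)[2]
      using cube_val[OF assms(1), of i] by auto
    done
  also have "\<dots> = \<rho> ^ card S * chi n S x"
    unfolding chi_def prod.distrib using assms(2)
    by (simp add: prod.If_cases Int_absorb1 Int_absorb2)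
  finally show ?thesis .
qed

lemma chi_sum:
  assumes "x \<in> cube n" "y \<in> cube n"
  shows "(\<Sum>S\<in>Pow {..<n}. chi n S y * chi n S x) = (if y = x then 2 ^ n else 0)"
proof -
  have "(\<Sum>S\<in>Pow {..<n}. chi n S y * chi n S x) = (\<Sum>S\<in>Pow {..<n}. (\<Prod>i\<in>S. y i * x i) * (\<Prod>i\<in>{..<n}-S. 1))"
    unfolding chi_def
    by (intro sum.cong refl) (auto simp: prod.distrib[symmetric] prod.If_cases Int_absorb1 Int_absorb2 intro!: prod.cong)
  also have "\<dots> = (\<Prod>i<n. y i * x i + 1)"
    by (rule prod_add[symmetric]) simp
  also have "\<dots> = (if y = x then 2 ^ n else 0)"
  proof (cases "y = x")
    case True
    have "(\<Prod>i<n. y i * x i + 1) = (\<Prod>i<n. (2::real))"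
      using cube_val[OF assms(1)] True by (intro prod.cong) (auto, metis mult_minus_left mult_1 minus_minus)
    then show ?thesis using True by simp
  next
    case False
    then obtain i where "i < n" "y i \<noteq> x i"
      using assms unfolding cube_def by (metis PiE_ext lessThan_iff)
    then have "y i * x i + 1 = 0" using cube_val[OF assms(1), of i] cube_val[OF assms(2), of i] by auto
    then show ?thesis using False \<open>i<n\<close> by (auto intro!: prod_zero)
  qed
  finally show ?thesis .
qed

definition coef :: "nat \<Rightarrow> ((nat \<Rightarrow> real) \<Rightarrow> real) \<Rightarrow> nat set \<Rightarrow> real" where
  "coef n f S = Ecube n (\<lambda>x. f x * chi n S x)"

lemma Ecube_cong:
  assumes "\<And>x. x \<in> cube n \<Longrightarrow> f x = g x" shows "Ecube n f = Ecube n g"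
proof -
  have "sum f (cube n) = sum g (cube n)" using assms by (rule sum.cong[OF refl])
  then show ?thesis unfolding Ecube_def by simp
qed

lemma noise_cong:
  assumes "\<And>x. x \<in> cube n \<Longrightarrow> f x = g x" shows "noise_op n \<rho> f y = noise_op n \<rho> g y"
  unfolding noise_op_def using assms by (intro sum.cong refl) auto

lemma expand:
  assumes "x \<in> cube n"
  shows "f x = (\<Sum>S\<in>Pow {..<n}. coef n f S * chi n S x)"
proof -
  have "(\<Sum>S\<in>Pow {..<n}. coef n f S * chi n S x)
      = (\<Sum>S\<in>Pow {..<n}. \<Sum>y\<in>cube n. f y / 2^n * (chi n S y * chi n S x))"
    unfolding coef_def Ecube_def sum_divide_distrib sum_distrib_right by (intro sum.cong refl) (simp add: mult_ac)
  also have "\<dots> = (\<Sum>y\<in>cube n. f y / 2^n * (\<Sum>S\<in>Pow {..<n}. chi n S y * chi n S x))"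
    by (subst sum.swap) (simp add: sum_distrib_left)
  also have "\<dots> = (\<Sum>y\<in>cube n. if y = x then f x else 0)"
    by (intro sum.cong refl) (simp add: chi_sum assms)
  also have "\<dots> = f x" using assms by simp
  finally show ?thesis by simp
qed

lemma proj:
  assumes "T \<subseteq> {..<n}"
  shows "Ecube n (\<lambda>x. (\<Sum>S\<in>Pow {..<n}. d S * chi n S x) * chi n T x) = d T"
proof -
  have "(\<Sum>x\<in>cube n. (\<Sum>S\<in>Pow {..<n}. d S * chi n S x) * chi n T x)
     = (\<Sum>x\<in>cube n. \<Sum>S\<in>Pow {..<n}. d S * (chi n S x * chi n T x))"
    by (simp add: sum_distrib_right mult.assoc)
  also have "\<dots> = (\<Sum>S\<in>Pow {..<n}. \<Sum>x\<in>cube n. d S * (chi n S x * chi n T x))"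
    by (rule sum.swap)
  also have "\<dots> = (\<Sum>S\<in>Pow {..<n}. d S * (\<Sum>x\<in>cube n. chi n S x * chi n T x))"
    by (simp add: sum_distrib_left)
  also have "\<dots> = (\<Sum>S\<in>Pow {..<n}. if S = T then d T * 2^n else 0)"
    by (intro sum.cong refl) (auto simp: chi_orth assms)
  also have "\<dots> = d T * 2^n" using assms by simp
  finally show ?thesis unfolding Ecube_def by simp
qed

lemma Ecube_sum: "finite A \<Longrightarrow> Ecube n (\<lambda>x. \<Sum>T\<in>A. h T x) = (\<Sum>T\<in>A. Ecube n (h T))"
  unfolding Ecube_def by (subst sum.swap) (simp add: sum_divide_distrib)

lemma Ecube_cmult: "Ecube n (\<lambda>x. c * h x) = c * Ecube n h"
  unfolding Ecube_def by (simp add: sum_distrib_left)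

lemma parseval:
  "Ecube n (\<lambda>x. (\<Sum>S\<in>Pow {..<n}. d S * chi n S x) * (\<Sum>S\<in>Pow {..<n}. e S * chi n S x))
     = (\<Sum>S\<in>Pow {..<n}. d S * e S)"
proof -
  have "Ecube n (\<lambda>x. (\<Sum>S\<in>Pow {..<n}. d S * chi n S x) * (\<Sum>S\<in>Pow {..<n}. e S * chi n S x))
     = Ecube n (\<lambda>x. \<Sum>T\<in>Pow {..<n}. e T * ((\<Sum>S\<in>Pow {..<n}. d S * chi n S x) * chi n T x))"
    by (simp add: sum_distrib_left mult_ac)
  also have "\<dots> = (\<Sum>T\<in>Pow {..<n}. e T * Ecube n (\<lambda>x. (\<Sum>S\<in>Pow {..<n}. d S * chi n S x) * chi n T x))"
    by (simp add: Ecube_sum Ecube_cmult)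
  also have "\<dots> = (\<Sum>T\<in>Pow {..<n}. e T * d T)"
    by (intro sum.cong refl) (simp add: proj)
  finally show ?thesis by (simp add: mult_ac)
qed

lemma noise_expand:
  assumes "x \<in> cube n"
  shows "noise_op n \<rho> f x = (\<Sum>S\<in>Pow {..<n}. (coef n f S * \<rho> ^ card S) * chi n S x)"
proof -
  let ?w = "\<lambda>y. (\<Prod>i<n. if y i = x i then (1 + \<rho>) / 2 else (1 - \<rho>) / 2)"
  have "noise_op n \<rho> f x = (\<Sum>y\<in>cube n. ?w y * (\<Sum>S\<in>Pow {..<n}. coef n f S * chi n S y))"
    unfolding noise_op_def by (intro sum.cong refl) (simp add: expand[symmetric])
  also have "\<dots> = (\<Sum>y\<in>cube n. \<Sum>S\<in>Pow {..<n}. coef n f S * (?w y * chi n S y))"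
    unfolding sum_distrib_left by (intro sum.cong refl) (simp add: mult_ac)
  also have "\<dots> = (\<Sum>S\<in>Pow {..<n}. \<Sum>y\<in>cube n. coef n f S * (?w y * chi n S y))"
    by (rule sum.swap)
  also have "\<dots> = (\<Sum>S\<in>Pow {..<n}. coef n f S * noise_op n \<rho> (chi n S) x)"
    unfolding noise_op_def by (simp add: sum_distrib_left)
  also have "\<dots> = (\<Sum>S\<in>Pow {..<n}. (coef n f S * \<rho> ^ card S) * chi n S x)"
    by (intro sum.cong refl) (simp add: noise_chi assms)
  finally show ?thesis .
qed

lemma Ecube_add: "Ecube n (\<lambda>x. f x + g x) = Ecube n f + Ecube n g"
  unfolding Ecube_def by (simp add: sum.distrib add_divide_distrib)

lemma Ecube_diff: "Ecube n (\<lambda>x. f x - g x) = Ecube n f - Ecube n g"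
  unfolding Ecube_def by (simp add: sum_subtractf diff_divide_distrib)

lemma Ecube_const: "Ecube n (\<lambda>x. c) = c"
  unfolding Ecube_def by (simp add: card_cube)

lemma chi_empty: "chi n {} x = 1"
  unfolding chi_def by simp

lemma chi_single: "i < n \<Longrightarrow> chi n {i} x = x i"
  unfolding chi_def by simp

lemma noise_range:
  assumes "boolean_fun n f" "x \<in> cube n" "0 < \<rho>" "\<rho> < 1"
  shows "0 \<le> noise_op n \<rho> f x \<and> noise_op n \<rho> f x \<le> 1"
proof -
  let ?w = "\<lambda>y. (\<Prod>i<n. if y i = x i then (1 + \<rho>) / 2 else (1 - \<rho>) / 2)"
  have w0: "?w y \<ge> 0" for y using assms by (intro prod_nonneg) auto
  have "noise_op n \<rho> (chi n {}) x = 1" using noise_chi[OF assms(2), of "{}" \<rho>] by (simp add: chi_empty)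
  then have sw: "(\<Sum>y\<in>cube n. ?w y) = 1" unfolding noise_op_def chi_empty by simp
  have f01: "0 \<le> f y \<and> f y \<le> 1" if "y \<in> cube n" for y
    using assms(1) that unfolding boolean_fun_def by auto
  have "noise_op n \<rho> f x = (\<Sum>y\<in>cube n. ?w y * f y)" unfolding noise_op_def by simp
  moreover have "(\<Sum>y\<in>cube n. ?w y * f y) \<ge> 0"
    using w0 f01 by (intro sum_nonneg) auto
  moreover have "(\<Sum>y\<in>cube n. ?w y * f y) \<le> (\<Sum>y\<in>cube n. ?w y)"
    using w0 f01 by (intro sum_mono) (simp add: mult_left_le)
  ultimately show ?thesis using sw by simp
qed



lemma fourier_ineq:
  fixes c :: "nat set \<Rightarrow> real"
  assumes r: "0 < \<rho>" "\<rho> \<le> 1"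
  shows "(\<Sum>S\<in>Pow {..<n}. (c S * \<rho>^card S) * (c S * \<rho>^card S))
           - \<rho>^2 * (\<Sum>S\<in>Pow {..<n}. c S * (c S * \<rho>^card S))
         \<le> (1 - \<rho>^2) * (c {})^2 + \<rho>^2 * (1 - \<rho>) * (\<Sum>i<n. (c {i})^2)"
proof -
  define B where "B S = (if S = {} then (1 - \<rho>^2) * (c S)^2 else 0)
                     + (if card S = 1 then \<rho>^2 * (1 - \<rho>) * (c S)^2 else 0)" for S
  have trm: "(c S * \<rho>^card S) * (c S * \<rho>^card S) - \<rho>^2 * (c S * (c S * \<rho>^card S)) \<le> B S" if SP: "S \<in> Pow {..<n}" for S
  proof -
    have fS: "finite S" using SP finite_subset by auto
    have eq: "(c S * \<rho>^card S) * (c S * \<rho>^card S) - \<rho>^2 * (c S * (c S * \<rho>^card S))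
          = (c S)^2 * (\<rho>^(2 * card S) - \<rho>^(card S + 2))"
      by (simp add: power2_eq_square power_add power_mult algebra_simps)
    consider "card S = 0" | "card S = 1" | "card S \<ge> 2" by linarith
    then show ?thesis
    proof cases
      case 1
      then have "S = {}" using fS by auto
      then show ?thesis unfolding eq B_def using 1
        by (auto simp: power2_eq_square algebra_simps)
    next
      case 2
      then have "S \<noteq> {}" by auto
      then show ?thesis unfolding eq B_def using 2 by (simp add: power2_eq_square algebra_simps)
    next
      case 3
      then have "\<rho>^(2 * card S) \<le> \<rho>^(card S + 2)"
        using r by (intro power_decreasing) auto
      then have "(c S)^2 * (\<rho>^(2 * card S) - \<rho>^(card S + 2)) \<le> 0"
        by (simp add: mult_nonneg_nonpos)
      moreover have "B S = 0" unfolding B_def using 3 by auto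
      ultimately show ?thesis unfolding eq by simp
    qed
  qed
  have "(\<Sum>S\<in>Pow {..<n}. (c S * \<rho>^card S) * (c S * \<rho>^card S))
           - \<rho>^2 * (\<Sum>S\<in>Pow {..<n}. c S * (c S * \<rho>^card S))
        = (\<Sum>S\<in>Pow {..<n}. (c S * \<rho>^card S) * (c S * \<rho>^card S) - \<rho>^2 * (c S * (c S * \<rho>^card S)))"
    by (simp add: sum_subtractf sum_distrib_left)
  also have "\<dots> \<le> (\<Sum>S\<in>Pow {..<n}. B S)" by (intro sum_mono trm)
  also have "\<dots> = (1 - \<rho>^2) * (c {})^2 + (\<Sum>S\<in>{S\<in>Pow {..<n}. card S = 1}. \<rho>^2 * (1 - \<rho>) * (c S)^2)"
    unfolding B_def sum.distrib by (simp add: sum.inter_filter[symmetric] del: One_nat_def)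
  also have "{S\<in>Pow {..<n}. card S = 1} = (\<lambda>i. {i}) ` {..<n}"
    by (auto simp: card_1_singleton_iff)
  also have "(\<Sum>S\<in>(\<lambda>i. {i}) ` {..<n}. \<rho>^2 * (1 - \<rho>) * (c S)^2) = (\<Sum>i<n. \<rho>^2 * (1 - \<rho>) * (c {i})^2)"
    by (subst sum.reindex) (auto simp: inj_on_def)
  finally show ?thesis by (simp add: sum_distrib_left)
qed



lemma SX_sum:
  assumes "0 < a" "a < 1"
  shows "(\<Sum>(s,t)\<in>SXpts a. h s t) = h (-a) (-1) + h (-a) 1 + h (1-a) (-1) + h (1-a) 1"
proof -
  have "-a \<noteq> 1 - a" by simp
  then show ?thesis unfolding SXpts_def by (simp add: add.assoc)
qed

lemma main:
  assumes bf: "boolean_fun n f" and Ef: "Ecube n f = a" and a: "0 < a" "a < 1"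
    and r: "0 < \<rho>" "\<rho> < 1" and n: "n > 0"
    and W: "W1 n f \<le> \<omega> a (maxcoef n f)"
  shows "\<exists>\<beta> K. (\<beta>, K) \<in> Ups_feasible \<rho> a \<omega> \<and>
     EJ a \<beta> K (\<lambda>s x z. \<Phi> (a + \<rho> * z)) = Ecube n (\<lambda>x. \<Phi> (noise_op n \<rho> f x))"
proof -
  define c where "c = coef n f"
  define \<beta> where "\<beta> = maxcoef n f"
  have fh: "fhat1 n f i = c {i}" if "i < n" for i
    unfolding fhat1_def c_def coef_def using that by (intro Ecube_cong) (simp add: chi_single)
  obtain i0 where i0: "i0 < n" "\<beta> = \<bar>c {i0}\<bar>"
  proof -
    have "\<beta> \<in> (\<lambda>i. \<bar>fhat1 n f i\<bar>) ` {..<n}" unfolding \<beta>_def maxcoef_def using n by (intro Max_in) auto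
    then show ?thesis using that fh by auto
  qed
  define \<sigma> where "\<sigma> = (if c {i0} \<ge> 0 then 1 else (-1::real))"
  have \<sigma>c: "\<sigma> * c {i0} = \<beta>" using i0 by (auto simp: \<sigma>_def)
  define T where "T x = noise_op n \<rho> f x" for x
  define Sv where "Sv x = f x - a" for x
  define Xv where "Xv x = \<sigma> * x i0" for x :: "nat \<Rightarrow> real"
  define Z where "Z x = (T x - a) / \<rho>" for x
  define A where "A q = {x \<in> cube n. (Sv x, Xv x) = q}" for q
  define K where "K s t = (if A (s,t) = {} then return_pmf 0 else map_pmf Z (pmf_of_set (A (s,t))))" for s t
  define d where "d S = c S * \<rho> ^ card S" for S
  have fexp: "f x = (\<Sum>S\<in>Pow {..<n}. c S * chi n S x)" if "x \<in> cube n" for x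
    using expand[OF that] c_def by simp
  have Texp: "T x = (\<Sum>S\<in>Pow {..<n}. d S * chi n S x)" if "x \<in> cube n" for x
    using noise_expand[OF that] unfolding T_def d_def c_def by simp
  have c0: "c {} = a" unfolding c_def coef_def chi_empty using Ef by simp
  have ET: "Ecube n T = a"
  proof -
    have "Ecube n T = Ecube n (\<lambda>x. (\<Sum>S\<in>Pow {..<n}. d S * chi n S x) * chi n {} x)"
      by (rule Ecube_cong) (simp add: Texp chi_empty)
    also have "\<dots> = a" by (simp add: proj d_def c0)
    finally show ?thesis .
  qed
  have Exi: "Ecube n (\<lambda>x. x i0) = 0"
  proof -
    have "Ecube n (\<lambda>x. x i0) = Ecube n (\<lambda>x. chi n {i0} x * chi n {} x)"
      by (rule Ecube_cong) (simp add: chi_single chi_empty i0)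
    also have "\<dots> = 0" unfolding Ecube_def using i0 by (subst chi_orth) auto
    finally show ?thesis .
  qed
  have ETx: "Ecube n (\<lambda>x. T x * x i0) = \<rho> * c {i0}"
  proof -
    have "Ecube n (\<lambda>x. T x * x i0) = Ecube n (\<lambda>x. (\<Sum>S\<in>Pow {..<n}. d S * chi n S x) * chi n {i0} x)"
      by (rule Ecube_cong) (simp add: Texp chi_single i0)
    also have "\<dots> = d {i0}" using i0 by (intro proj) auto
    finally show ?thesis by (simp add: d_def)
  qed
  have Efx: "Ecube n (\<lambda>x. f x * x i0) = c {i0}" using fh[OF i0(1)] unfolding fhat1_def by simp
  have ETT: "Ecube n (\<lambda>x. T x * T x) = (\<Sum>S\<in>Pow {..<n}. d S * d S)"
    by (subst parseval[symmetric]) (rule Ecube_cong, simp add: Texp)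
  have EfT: "Ecube n (\<lambda>x. f x * T x) = (\<Sum>S\<in>Pow {..<n}. c S * d S)"
    by (subst parseval[symmetric]) (rule Ecube_cong, simp add: Texp fexp)
  have T01: "0 \<le> T x \<and> T x \<le> 1" if "x \<in> cube n" for x using noise_range[OF bf that r] T_def by simp
  have SX: "(Sv x, Xv x) \<in> SXpts a" if "x \<in> cube n" for x
    using bf that cube_val[OF that i0(1)] unfolding boolean_fun_def Sv_def Xv_def SXpts_def \<sigma>_def by auto
  have finSX: "finite (SXpts a)" unfolding SXpts_def by simp
  have group: "(\<Sum>x\<in>cube n. h x) = (\<Sum>q\<in>SXpts a. \<Sum>x\<in>A q. h x)" for h :: "_ \<Rightarrow> real"
    unfolding A_def
    by (rule sum.group[of "cube n" "SXpts a" "\<lambda>x. (Sv x, Xv x)" h, symmetric]) (use SX finSX in auto)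
  define N where "N q = real (card (A q)) / 2^n" for q
  have cnt: "Ecube n (\<lambda>x. g (Sv x) (Xv x)) = (\<Sum>(s,t)\<in>SXpts a. N (s,t) * g s t)" for g
  proof -
    have "(\<Sum>x\<in>cube n. g (Sv x) (Xv x)) = (\<Sum>(s,t)\<in>SXpts a. real (card (A (s,t))) * g s t)"
      unfolding group
    proof (rule sum.cong[OF refl], clarify)
      fix s t
      have "(\<Sum>x\<in>A (s,t). g (Sv x) (Xv x)) = (\<Sum>x\<in>A (s,t). g s t)"
        by (rule sum.cong) (auto simp: A_def)
      then show "(\<Sum>x\<in>A (s,t). g (Sv x) (Xv x)) = real (card (A (s,t))) * g s t" by simp
    qed
    then show ?thesis unfolding Ecube_def N_def
      by (simp add: sum_divide_distrib case_prod_unfold)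
  qed
  have cnt': "Ecube n (\<lambda>x. g (Sv x) (Xv x)) = N (-a,-1) * g (-a) (-1) + N (-a,1) * g (-a) 1
      + N (1-a,-1) * g (1-a) (-1) + N (1-a,1) * g (1-a) 1" for g
    unfolding cnt by (rule SX_sum[OF a])
  have e1: "N (-a,-1) + N (-a,1) + N (1-a,-1) + N (1-a,1) = 1"
    using cnt'[of "\<lambda>s t. 1"] by (simp add: Ecube_const SX_sum a)
  have e2: "N (1-a,-1) + N (1-a,1) = a"
  proof -
    have "Ecube n (\<lambda>x. Sv x + a) = a" unfolding Sv_def using Ef by simp
    then show ?thesis using cnt'[of "\<lambda>s t. s + a"] by (simp add: SX_sum a)
  qed
  have e3: "N (1-a,1) - N (1-a,-1) = \<beta>"
  proof -
    have "Ecube n (\<lambda>x. (Sv x + a) * Xv x) = \<sigma> * Ecube n (\<lambda>x. f x * x i0)"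
      unfolding Sv_def Xv_def by (simp add: Ecube_cmult[symmetric] mult_ac)
    then have "Ecube n (\<lambda>x. (Sv x + a) * Xv x) = \<beta>" using Efx \<sigma>c by simp
    then show ?thesis using cnt'[of "\<lambda>s t. (s + a) * t"] by (simp add: SX_sum a)
  qed
  have e4: "- N (-a,-1) + N (-a,1) - N (1-a,-1) + N (1-a,1) = 0"
  proof -
    have "Ecube n (\<lambda>x. Xv x) = 0" unfolding Xv_def by (simp add: Ecube_cmult Exi)
    then show ?thesis using cnt'[of "\<lambda>s t. t"] by (simp add: SX_sum a)
  qed
  have Nnn: "N q \<ge> 0" for q unfolding N_def by simp
  have NP: "N (s,t) = PSX a \<beta> s t" if "(s,t) \<in> SXpts a" for s t
  proof -
    have "-a \<noteq> 1 - a" by simp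
    then show ?thesis using that e1 e2 e3 e4 unfolding SXpts_def PSX_def by auto
  qed
  have b0: "0 \<le> \<beta>" using i0 by simp
  have b1: "\<beta> \<le> min a (1 - a)"
    using Nnn[of "(1-a,-1)"] Nnn[of "(-a,1)"] e1 e2 e3 e4 by simp
  have finA: "finite (A q)" for q unfolding A_def by simp
  have EK: "real (card (A (s,t))) * measure_pmf.expectation (K s t) h = (\<Sum>x\<in>A (s,t). h (Z x))" for s t h
  proof (cases "A (s,t) = {}")
    case True then show ?thesis by simp
  next
    case False
    then have "card (A (s,t)) > 0" using finA card_gt_0_iff by blast
    then show ?thesis unfolding K_def using False finA by (simp add: integral_pmf_of_set)
  qed
  have EJE: "EJ a \<beta> K g = Ecube n (\<lambda>x. g (Sv x) (Xv x) (Z x))" for g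
  proof -
    have "EJ a \<beta> K g = (\<Sum>(s,t)\<in>SXpts a. N (s,t) * measure_pmf.expectation (K s t) (g s t))"
      unfolding EJ_def by (intro sum.cong refl) (auto simp: NP)
    also have "\<dots> = (\<Sum>(s,t)\<in>SXpts a. (\<Sum>x\<in>A (s,t). g (Sv x) (Xv x) (Z x)) / 2^n)"
    proof (rule sum.cong[OF refl], clarify)
      fix s t
      have "(\<Sum>x\<in>A (s,t). g (Sv x) (Xv x) (Z x)) = (\<Sum>x\<in>A (s,t). g s t (Z x))"
        by (rule sum.cong) (auto simp: A_def)
      then show "N (s,t) * measure_pmf.expectation (K s t) (g s t) = (\<Sum>x\<in>A (s,t). g (Sv x) (Xv x) (Z x)) / 2^n"
        using EK[of s t "g s t"] unfolding N_def by simp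
    qed
    also have "\<dots> = Ecube n (\<lambda>x. g (Sv x) (Xv x) (Z x))"
      unfolding Ecube_def group by (simp add: sum_divide_distrib case_prod_unfold)
    finally show ?thesis .
  qed
  have EZ: "Ecube n Z = 0"
  proof -
    have "Ecube n Z = Ecube n (\<lambda>x. (1/\<rho>) * T x - a/\<rho>)"
      by (rule Ecube_cong) (simp add: Z_def diff_divide_distrib)
    then show ?thesis unfolding Ecube_diff Ecube_cmult Ecube_const ET using r by simp
  qed
  have EXZ: "Ecube n (\<lambda>x. Xv x * Z x) = \<beta>"
  proof -
    have "Ecube n (\<lambda>x. Xv x * Z x) = Ecube n (\<lambda>x. (\<sigma>/\<rho>) * (T x * x i0) - (\<sigma>*a/\<rho>) * x i0)"
      using r by (intro Ecube_cong) (simp add: Xv_def Z_def, simp add: divide_simps algebra_simps)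
    then show ?thesis unfolding Ecube_diff Ecube_cmult ETx Exi using r \<sigma>c by simp
  qed
  define DD where "DD = (\<Sum>S\<in>Pow {..<n}. (c S * \<rho>^card S) * (c S * \<rho>^card S))"
  define CD where "CD = (\<Sum>S\<in>Pow {..<n}. c S * (c S * \<rho>^card S))"
  have EZ2: "Ecube n (\<lambda>x. (Z x)^2) = (DD - a^2) / \<rho>^2"
  proof -
    have "Ecube n (\<lambda>x. (Z x)^2) = Ecube n (\<lambda>x. (1/\<rho>^2) * (T x * T x) - (2*a/\<rho>^2) * T x + a^2/\<rho>^2)"
      using r by (intro Ecube_cong) (simp add: Z_def, simp add: power2_eq_square divide_simps algebra_simps)
    then show ?thesis unfolding Ecube_diff Ecube_add Ecube_cmult Ecube_const ET ETT using r
      by (simp add: DD_def d_def field_simps power2_eq_square)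
  qed
  have ESZ: "Ecube n (\<lambda>x. Sv x * Z x) = (CD - a^2) / \<rho>"
  proof -
    have "Ecube n (\<lambda>x. Sv x * Z x) = Ecube n (\<lambda>x. (1/\<rho>) * (f x * T x) - (a/\<rho>) * T x - (a/\<rho>) * f x + a^2/\<rho>)"
      using r by (intro Ecube_cong) (simp add: Sv_def Z_def, simp add: power2_eq_square divide_simps algebra_simps)
    also have "\<dots> = (1/\<rho>) * CD - (a/\<rho>) * a - (a/\<rho>) * a + a^2/\<rho>"
      unfolding Ecube_diff Ecube_add Ecube_cmult Ecube_const ET EfT Ef CD_def d_def by simp
    also have "\<dots> = (CD - a^2) / \<rho>"
      by (simp add: diff_divide_distrib add_divide_distrib power2_eq_square)
    finally show ?thesis .
  qed
  have W1c: "W1 n f = (\<Sum>i<n. (c {i})^2)" unfolding W1_def by (intro sum.cong refl) (simp add: fh)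
  have FI: "DD - \<rho>^2 * CD \<le> (1 - \<rho>^2) * a^2 + \<rho>^2 * (1 - \<rho>) * W1 n f"
    using fourier_ineq[where c=c and n=n and \<rho>=\<rho>] r unfolding DD_def CD_def W1c c0 by simp
  have "\<rho>^2 * (1 - \<rho>) * W1 n f \<le> \<rho>^2 * (1 - \<rho>) * \<omega> a \<beta>"
    using W r unfolding \<beta>_def by (intro mult_left_mono) auto
  with FI have "DD - a^2 \<le> \<rho>^2 * ((1 - \<rho>) * \<omega> a \<beta> + (CD - a^2))"
    by (simp add: algebra_simps)
  then have Q: "(DD - a^2) / \<rho>^2 \<le> (1 - \<rho>) * \<omega> a \<beta> + \<rho> * ((CD - a^2) / \<rho>)"
    using r by (simp add: pos_divide_le_eq mult_ac)
  have supp: "0 \<le> a + \<rho> * z \<and> a + \<rho> * z \<le> 1" if "z \<in> set_pmf (K s t)" for s t z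
  proof (cases "A (s,t) = {}")
    case True then show ?thesis using that a unfolding K_def by simp
  next
    case False
    have "z \<in> Z ` A (s,t)" using that False finA[of "(s,t)"] unfolding K_def by simp
    then obtain x where "x \<in> A (s,t)" "z = Z x" by auto
    then have "x \<in> cube n" "a + \<rho> * z = T x" using r unfolding A_def Z_def by auto
    then show ?thesis using T01 by simp
  qed
  have s1: "\<forall>(s, x)\<in>SXpts a. PSX a \<beta> s x > 0 \<longrightarrow>
        (\<forall>z\<in>set_pmf (K s x). 0 \<le> a + \<rho> * z \<and> a + \<rho> * z \<le> 1)"
    using supp by blast
  have s2: "EJ a \<beta> K (\<lambda>s x z. z) = 0" using EJE[of "\<lambda>s x z. z"] EZ by simp
  have s3: "EJ a \<beta> K (\<lambda>s x z. x * z) = \<beta>" using EJE[of "\<lambda>s x z. x * z"] EXZ by simp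
  have s4: "EJ a \<beta> K (\<lambda>s x z. z\<^sup>2) \<le> (1 - \<rho>) * \<omega> a \<beta> + \<rho> * EJ a \<beta> K (\<lambda>s x z. s * z)"
    using EJE[of "\<lambda>s x z. z\<^sup>2"] EJE[of "\<lambda>s x z. s * z"] EZ2 ESZ Q by simp
  have feas: "(\<beta>, K) \<in> Ups_feasible \<rho> a \<omega>"
    unfolding Ups_feasible_def using b0 b1 s1 s2 s3 s4 by simp
  have val: "EJ a \<beta> K (\<lambda>s x z. \<Phi> (a + \<rho> * z)) = Ecube n (\<lambda>x. \<Phi> (noise_op n \<rho> f x))"
    unfolding EJE using r by (intro Ecube_cong) (simp add: Z_def T_def)
  show ?thesis by (intro exI[of _ \<beta>] exI[of _ K] conjI feas val)
qed



lemma restrict_noise: "noise_op n \<rho> (restrict f (cube n)) x = noise_op n \<rho> f x"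
  by (rule noise_cong) simp

lemma restrict_W1: "W1 n (restrict f (cube n)) = W1 n f"
  unfolding W1_def fhat1_def by (intro sum.cong refl arg_cong[where f="\<lambda>v. v^2"] Ecube_cong) simp

lemma restrict_bool: "boolean_fun n f \<Longrightarrow> restrict f (cube n) \<in> PiE (cube n) (\<lambda>_. {0,1})"
  unfolding boolean_fun_def by auto

theorem theorem3p4:
  fixes n :: nat and \<rho> a :: real and \<Phi> :: "real \<Rightarrow> real"
    and \<omega> :: "real \<Rightarrow> real \<Rightarrow> real"
  assumes "continuous_on {0..1} \<Phi>" and "strictly_convex_on {0..1} \<Phi>"
    and "\<And>a' \<beta>. W_feasible n a' \<beta> \<noteq> {} \<Longrightarrow> Wn n a' \<beta> \<le> \<omega> a' \<beta>"
    and "0 < a" "a < 1" "0 < \<rho>" "\<rho> < 1"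
    and "2 ^ n * a \<in> \<int>"
  shows "ereal (MaxStab n \<rho> \<Phi> a) \<le> Upsilon \<rho> \<Phi> \<omega> a"
proof -
  note a = assms(4,5) and r = assms(6,7)
  obtain k :: int where k: "2 ^ n * a = of_int k" using assms(8) Ints_cases by metis
  have kpos: "0 < k" using k a by (metis mult_pos_pos of_int_0_less_iff zero_less_numeral zero_less_power)
  have klt: "k < 2 ^ n"
  proof -
    have "(2::real) ^ n * a < 2 ^ n" using a by simp
    then have "real_of_int k < real_of_int (2 ^ n)" using k by simp
    then show ?thesis by linarith
  qed
  have n: "n > 0"
  proof (rule ccontr)
    assume "\<not> n > 0" then have "n = 0" by simp
    then show False using kpos klt by simp
  qed
  define V where "V f = Ecube n (\<lambda>x. \<Phi> (noise_op n \<rho> f x))" for f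
  define SS where "SS = {Ecube n (\<lambda>x. \<Phi> (noise_op n \<rho> f x)) | f. boolean_fun n f \<and> Ecube n f = a}"
  have fin: "finite SS"
  proof (rule finite_subset)
    show "SS \<subseteq> V ` PiE (cube n) (\<lambda>_. {0,1})"
    proof
      fix v assume "v \<in> SS"
      then obtain f where f: "boolean_fun n f" "v = V f" unfolding SS_def V_def by auto
      have "V f = V (restrict f (cube n))" unfolding V_def by (simp add: restrict_noise)
      then show "v \<in> V ` PiE (cube n) (\<lambda>_. {0,1})" using f restrict_bool by blast
    qed
    show "finite (V ` PiE (cube n) (\<lambda>_. {0,1::real}))" by (intro finite_imageI finite_PiE) auto
  qed
  have ne: "SS \<noteq> {}"
  proof -
    have "nat k \<le> card (cube n)" using klt kpos by (simp add: card_cube nat_less_iff less_imp_le)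
    then obtain B where B: "B \<subseteq> cube n" "card B = nat k" by (meson obtain_subset_with_card_n)
    define f0 where "f0 x = (if x \<in> B then 1 else (0::real))" for x
    have "boolean_fun n f0" unfolding boolean_fun_def f0_def by auto
    moreover have "Ecube n f0 = a"
    proof -
      have "(\<Sum>x\<in>cube n. f0 x) = real (card B)"
        unfolding f0_def using B(1) by (simp add: sum.If_cases Int_absorb1)
      then show ?thesis unfolding Ecube_def using B(2) k kpos
        by (simp add: field_simps)
    qed
    ultimately show ?thesis unfolding SS_def by blast
  qed
  have "MaxStab n \<rho> \<Phi> a \<in> SS" unfolding MaxStab_def SS_def[symmetric] using fin ne by (rule Max_in)
  then obtain f where bf: "boolean_fun n f" and Ef: "Ecube n f = a"
    and M: "MaxStab n \<rho> \<Phi> a = Ecube n (\<lambda>x. \<Phi> (noise_op n \<rho> f x))"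
    unfolding SS_def by auto
  have fW: "f \<in> W_feasible n a (maxcoef n f)" unfolding W_feasible_def using bf Ef by simp
  have finW: "finite (W1 n ` W_feasible n a (maxcoef n f))"
  proof (rule finite_subset)
    show "W1 n ` W_feasible n a (maxcoef n f) \<subseteq> W1 n ` PiE (cube n) (\<lambda>_. {0,1})"
    proof
      fix v assume "v \<in> W1 n ` W_feasible n a (maxcoef n f)"
      then obtain g where g: "boolean_fun n g" "v = W1 n g" unfolding W_feasible_def by auto
      then show "v \<in> W1 n ` PiE (cube n) (\<lambda>_. {0,1})"
        using restrict_bool[OF g(1)] restrict_W1[of n g] by (metis image_eqI)
    qed
    show "finite (W1 n ` PiE (cube n) (\<lambda>_. {0,1::real}))" by (intro finite_imageI finite_PiE) auto
  qed
  have "W1 n f \<le> Wn n a (maxcoef n f)" unfolding Wn_def using finW fW by (intro Max_ge) auto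
  also have "\<dots> \<le> \<omega> a (maxcoef n f)" using assms(3) fW by blast
  finally have W: "W1 n f \<le> \<omega> a (maxcoef n f)" .
  obtain \<beta> K where feas: "(\<beta>, K) \<in> Ups_feasible \<rho> a \<omega>"
    and val: "EJ a \<beta> K (\<lambda>s x z. \<Phi> (a + \<rho> * z)) = Ecube n (\<lambda>x. \<Phi> (noise_op n \<rho> f x))"
    using main[where \<omega>=\<omega> and \<Phi>=\<Phi>, OF bf Ef a r n W] by blast
  have "ereal (EJ a \<beta> K (\<lambda>s x z. \<Phi> (a + \<rho> * z)))
      \<le> (SUP (\<beta>, K)\<in>Ups_feasible \<rho> a \<omega>. ereal (EJ a \<beta> K (\<lambda>s x z. \<Phi> (a + \<rho> * z))))"
    using SUP_upper[OF feas, of "\<lambda>(\<beta>, K). ereal (EJ a \<beta> K (\<lambda>s x z. \<Phi> (a + \<rho> * z)))"] by simp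
  then show ?thesis unfolding Upsilon_def M val[symmetric] .
qed

end
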